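(* Let $a\in(0,1]$, $b>1$, $c\in(0,+\infty)$, and let $\underline F:[0,\infty)\to[0,\infty)$ be defined by $\underline F(s)=c|s^a-1|^{1/a}$ for $s\in[1/b,b]$, $\underline F(s)=\underline F(b)+\kappa(s-b)$ for $s\ge b$, where $\kappa$ is the left derivative at $b$ of $s\mapsto c|s^a-1|^{1/a}$, and $\underline F(s)=s\,\underline F(1/s)$ for $0<s\le 1/b$ (extended by continuity at $0$), so that $\underline F\in\Gamma_0^s(\mathbb{R}_+)$ is linear on $[0,1/b]$ and on $[b,\infty)$. Then for every $s\ge0$, $$\lim_{n\to\infty}T_a^{(n)}(\underline F)(s)=c|s^a-1|^{1/a}.$$
   Context: $\Gamma_0(\mathbb{R}_+)$ is the set of functions $F:[0,\infty)\to[0,\infty]$ that are convex, lower semicontinuous, with $F(1)=0$. For $F\in\Gamma_0(\mathbb{R}_+)$: $\mathrm{rec}(F)(r)=\lim_{\alpha\to\infty}F(1+\alpha r)/\alpha$, $F'_\infty:=\mathrm{rec}(F)(1)$; the perspective function is $\hat F(r,t)=tF(r/t)$ for $t>0$, $\hat F(r,0)=\mathrm{rec}(F)(r)$; the reverse entropy is $R(s)=sF(1/s)$ for $s>0$, $R(0)=F'_\infty$. $\Gamma_0^s(\mathbb{R}_+)$ is the set of $F\in\Gamma_0(\mathbb{R}_+)$ with $F=R$. The marginal perspective function $H_F$ is the lower semicontinuous envelope of $\tilde H_F(r_1,r_2)=\inf_{\theta>0}[\hat F(\theta,r_1)+\hat F(\theta,r_2)]$. For $a\in(0,1]$, $T_a:\Gamma_0(\mathbb{R}_+)\to\Gamma_0^s(\mathbb{R}_+)$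 is $T_a(F)(s)=2^{1/a-1}H_F(1,s)$, and $T_a^{(n)}$ is its $n$-th iterate. *)

theory Defs
  imports "HOL-Analysis.Analysis"
begin

text \<open>Entropy functions F : [0,\<infinity>) \<rightarrow> [0,\<infinity>] are represented as real \<Rightarrow> ereal;
  only their values on [0,\<infinity>) are ever used.\<close>

definition recF :: "(real \<Rightarrow> ereal) \<Rightarrow> real \<Rightarrow> ereal" where
  "recF F r = Lim at_top (\<lambda>\<alpha>::real. F (1 + \<alpha> * r) / ereal \<alpha>)"

definition persp :: "(real \<Rightarrow> ereal) \<Rightarrow> real \<Rightarrow> real \<Rightarrow> ereal" where
  "persp F r t = (if t > 0 then ereal t * F (r / t) else recF F r)"

definition tildeH :: "(real \<Rightarrow> ereal) \<Rightarrow> real \<times> real \<Rightarrow> ereal" where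
  "tildeH F p = (INF \<theta>\<in>{0<..}. persp F \<theta> (fst p) + persp F \<theta> (snd p))"

text \<open>Lower semicontinuous envelope of tildeH on [0,\<infinity>) x [0,\<infinity>):
  value at x is min (tildeH x) (liminf of tildeH at x within the domain).\<close>
definition HF :: "(real \<Rightarrow> ereal) \<Rightarrow> real \<Rightarrow> real \<Rightarrow> ereal" where
  "HF F r1 r2 = min (tildeH F (r1, r2))
      (Liminf (at (r1, r2) within ({0..} \<times> {0..})) (tildeH F))"

definition Ta :: "real \<Rightarrow> (real \<Rightarrow> ereal) \<Rightarrow> (real \<Rightarrow> ereal)" where
  "Ta a F = (\<lambda>s. ereal (2 powr (1 / a - 1)) * HF F 1 s)"

definition gpow :: "real \<Rightarrow> real \<Rightarrow> real \<Rightarrow> real" where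
  "gpow a c s = c * \<bar>s powr a - 1\<bar> powr (1 / a)"

definition kappa :: "real \<Rightarrow> real \<Rightarrow> real \<Rightarrow> real" where
  "kappa a b c = (THE k. (gpow a c has_real_derivative k) (at_left b))"

definition Fup :: "real \<Rightarrow> real \<Rightarrow> real \<Rightarrow> real \<Rightarrow> real" where
  "Fup a b c s = gpow a c b + kappa a b c * (s - b)"

definition Flow :: "real \<Rightarrow> real \<Rightarrow> real \<Rightarrow> real \<Rightarrow> real" where
  "Flow a b c s =
     (if s \<ge> b then Fup a b c s
      else if s \<ge> 1 / b then gpow a c s
      else if s > 0 then s * Fup a b c (1 / s)
      else Lim (at_right 0) (\<lambda>t. t * Fup a b c (1 / t)))"

end

theory Submission
  imports Defs
begin

lemma incr_split:
  fixes f f' :: "real \<Rightarrow> real"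
  assumes uv: "u \<le> v" and cont: "continuous_on {u..v} f"
    and d: "\<And>z. u < z \<Longrightarrow> z < v \<Longrightarrow> z \<noteq> 1 \<Longrightarrow> DERIV f z :> f' z \<and> f' z \<ge> 0"
  shows "f u \<le> f v"
proof (cases "u < 1 \<and> 1 < v")
  case True
  have "f u \<le> f 1"
  proof (rule DERIV_nonneg_imp_increasing_open[of u 1 f])
    show "continuous_on {u..1} f" by (rule continuous_on_subset[OF cont]) (use True in auto)
  qed (use True d in force)+
  moreover have "f 1 \<le> f v"
  proof (rule DERIV_nonneg_imp_increasing_open[of 1 v f])
    show "continuous_on {1..v} f" by (rule continuous_on_subset[OF cont]) (use True in auto)
    fix z assume "1 < z" "z < v"
    thus "\<exists>y. DERIV f z :> y \<and> 0 \<le> y" using d[of z] True by (intro exI[of _ "f' z"]) auto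
  qed (use True in simp)
  ultimately show ?thesis by simp
next
  case False
  show ?thesis
    by (rule DERIV_nonneg_imp_increasing_open[OF uv _ cont]) (use False d in \<open>force\<close>)
qed

lemma Ta_cong:
  assumes "\<And>x. x > 0 \<Longrightarrow> F x = G x"
  shows "Ta a F = Ta a G"
proof -
  have r: "recF F r = recF G r" if r: "r > 0" for r
  proof -
    have "\<forall>\<^sub>F x in at_top. F (1 + x * r) / ereal x = G (1 + x * r) / ereal x"
    proof -
      have "\<forall>\<^sub>F x in at_top. (x::real) > 0" by (rule eventually_gt_at_top)
      thus ?thesis
      proof eventually_elim
        case (elim x)
        hence "1 + x * r > 0" using r by (smt (verit) mult_pos_pos)
        thus ?case using assms by simp
      qed
    qed
    hence "(\<lambda>l. ((\<lambda>x. F (1 + x * r) / ereal x) \<longlongrightarrow> l) at_top) = (\<lambda>l. ((\<lambda>x. G (1 + x * r) / ereal x) \<longlongrightarrow> l) at_top)"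
      by (intro ext tendsto_cong)
    thus ?thesis unfolding recF_def Topological_Spaces.Lim_def by (rule arg_cong[where f=The])
  qed
  have p: "persp F r t = persp G r t" if "r > 0" for r t
    unfolding persp_def using r that assms by simp
  have "tildeH F = tildeH G"
    unfolding tildeH_def by (intro ext INF_cong) (auto simp: p)
  thus ?thesis unfolding Ta_def HF_def by simp
qed

definition Dd :: "real \<Rightarrow> real \<Rightarrow> real \<Rightarrow> real" where
  "Dd a c y = (if y \<ge> 1 then c * (1 - 1 / (y powr a)) powr (1/a - 1)
               else - (c * (1 / (y powr a) - 1) powr (1/a - 1)))"

definition Aa :: "real \<Rightarrow> real \<Rightarrow> real \<Rightarrow> real" where
  "Aa a c y = gpow a c y - Dd a c y * y"

definition Qv :: "real \<Rightarrow> real \<Rightarrow> real \<Rightarrow> real \<Rightarrow> real \<Rightarrow> real" where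
  "Qv a b c t th = (if t > 0 then Flow a b c th + t * Flow a b c (th / t) else Flow a b c th + Dd a c b * th)"

definition bn :: "real \<Rightarrow> real \<Rightarrow> real" where
  "bn a b = (2 * b powr a - 1) powr (1/a)"

definition Pr :: "real \<Rightarrow> real \<Rightarrow> real \<Rightarrow> real \<Rightarrow> real \<Rightarrow> real" where
  "Pr a b c r th = (if r > 0 then r * Flow a b c (th / r) else Dd a c b * th)"

definition Cert where
  "Cert a b c t y0 y1 th \<longleftrightarrow> 1/b \<le> y0 \<and> y0 \<le> b \<and> 1/b \<le> y1 \<and> y1 \<le> b \<and> Dd a c y0 + Dd a c y1 = 0 \<and>
     th > 0 \<and> Qv a b c t th = Aa a c y0 + t * Aa a c y1 \<and>
     2 powr (1/a - 1) * (Aa a c y0 + t * Aa a c y1) = Flow a (bn a b) c t"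

context
  fixes a c :: real
  assumes a0: "0 < a" and a1: "a \<le> 1" and c0: "c > 0"
begin

lemma deriv_gt1:
  assumes y: "y > 1"
  shows "DERIV (gpow a c) y :> Dd a c y"
proof -
  have ya: "y powr a > 1" using y a0 by (simp add: powr_less_one ge_one_powr_ge_zero)
  have d: "DERIV (\<lambda>x. c * (x powr a - 1) powr (1/a)) y :>
     c * ((1/a) * (y powr a - 1) powr (1/a - 1) * (a * y powr (a - 1)))"
    using ya y by (auto intro!: derivative_eq_intros)
  have e: "c * ((1/a) * (y powr a - 1) powr (1/a - 1) * (a * y powr (a - 1))) = Dd a c y"
  proof -
    have "(1 - 1 / (y powr a)) = (y powr a - 1) / y powr a" using ya y by (simp add: diff_divide_distrib)
    hence 1: "(1 - 1 / (y powr a)) powr (1/a - 1) = (y powr a - 1) powr (1/a - 1) / (y powr a) powr (1/a - 1)"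
      using ya by (simp add: powr_divide)
    have 2: "(y powr a) powr (1/a - 1) = y powr (1 - a)"
      using a0 y by (simp add: powr_powr algebra_simps)
    have 3: "y powr (a - 1) = 1 / y powr (1 - a)"
      using y by (simp add: powr_minus_divide[symmetric] powr_minus)
    have "Dd a c y = c * ((y powr a - 1) powr (1/a - 1) / y powr (1 - a))"
      unfolding Dd_def using y 1 2 by simp
    also have "\<dots> = c * ((1/a) * (y powr a - 1) powr (1/a - 1) * (a * y powr (a - 1)))"
      unfolding 3 using a0 by simp
    finally show ?thesis by simp
  qed
  have ev: "\<forall>\<^sub>F x in nhds y. c * (x powr a - 1) powr (1/a) = gpow a c x"
  proof -
    have "\<forall>\<^sub>F x in nhds y. x > 1" using eventually_nhds_in_open[of "{1<..}" y] y by simp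
    thus ?thesis
    proof eventually_elim
      case (elim x)
      hence "x powr a > 1" using a0 by (simp add: powr_less_one ge_one_powr_ge_zero)
      thus ?case unfolding gpow_def by simp
    qed
  qed
  show ?thesis using DERIV_cong_ev[OF refl ev refl] d e by simp
qed

lemma pw_lt1: "0 \<le> y \<Longrightarrow> y < 1 \<Longrightarrow> y powr a < 1"
  using powr_less_mono2[of a y 1] a0 by simp

lemma pw_le1: "0 \<le> y \<Longrightarrow> y \<le> 1 \<Longrightarrow> y powr a \<le> 1"
  using powr_mono2[of a y 1] a0 by simp

lemma pw_gt1: "1 < y \<Longrightarrow> 1 < y powr a"
  using powr_less_mono2[of a 1 y] a0 by simp

lemma pw_ge1: "1 \<le> y \<Longrightarrow> 1 \<le> y powr a"
  using powr_mono2[of a 1 y] a0 by simp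

lemma deriv_lt1:
  assumes y: "y < 1" "y > 0"
  shows "DERIV (gpow a c) y :> Dd a c y"
proof -
  have ya: "y powr a < 1" "y powr a > 0" using y a0 pw_lt1 by auto
  have d: "DERIV (\<lambda>x. c * (1 - x powr a) powr (1/a)) y :>
     c * ((1/a) * (1 - y powr a) powr (1/a - 1) * (- (a * y powr (a - 1))))"
    using ya y by (auto intro!: derivative_eq_intros)
  have e: "c * ((1/a) * (1 - y powr a) powr (1/a - 1) * (- (a * y powr (a - 1)))) = Dd a c y"
  proof -
    have "(1 / (y powr a) - 1) = (1 - y powr a) / y powr a" using ya y by (simp add: diff_divide_distrib)
    hence 1: "(1 / (y powr a) - 1) powr (1/a - 1) = (1 - y powr a) powr (1/a - 1) / (y powr a) powr (1/a - 1)"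
      using ya by (simp add: powr_divide)
    have 2: "(y powr a) powr (1/a - 1) = y powr (1 - a)"
      using a0 y by (simp add: powr_powr algebra_simps)
    have 3: "y powr (a - 1) = 1 / y powr (1 - a)"
      using y by (simp add: powr_minus_divide[symmetric] powr_minus)
    have "Dd a c y = - (c * ((1 - y powr a) powr (1/a - 1) / y powr (1 - a)))"
      unfolding Dd_def using y 1 2 by simp
    also have "\<dots> = c * ((1/a) * (1 - y powr a) powr (1/a - 1) * (- (a * y powr (a - 1))))"
      unfolding 3 using a0 by simp
    finally show ?thesis by simp
  qed
  have ev: "\<forall>\<^sub>F x in nhds y. c * (1 - x powr a) powr (1/a) = gpow a c x"
  proof -
    have "\<forall>\<^sub>F x in nhds y. x \<in> {0<..<1}" using eventually_nhds_in_open[of "{0<..<1}" y] y by simp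
    thus ?thesis
    proof eventually_elim
      case (elim x)
      hence "x powr a < 1" using pw_lt1 by simp
      thus ?case unfolding gpow_def by simp
    qed
  qed
  show ?thesis using DERIV_cong_ev[OF refl ev refl] d e by simp
qed

lemma gpow_cont: "continuous_on {0<..} (gpow a c)"
  unfolding gpow_def using a0
  by (intro continuous_intros continuous_on_powr') (auto intro!: continuous_intros)

lemma Dd_mono:
  assumes "0 < y" "y \<le> z"
  shows "Dd a c y \<le> Dd a c z"
proof -
  have ap: "1/a - 1 \<ge> 0" using a0 a1 by simp
  have yz: "y powr a \<le> z powr a" using assms a0 by (simp add: powr_mono2)
  have pos: "y powr a > 0" "z powr a > 0" using assms by auto
  consider "1 \<le> y" | "y < 1" "1 \<le> z" | "z < 1" using assms by linarith
  then show ?thesis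
  proof cases
    case 1
    hence "1 \<le> y powr a" using pw_ge1 by simp
    hence "0 \<le> 1 - 1 / y powr a" by (simp add: divide_le_eq)
    moreover have "1 - 1 / y powr a \<le> 1 - 1 / z powr a" using yz pos by (simp add: frac_le)
    ultimately have "(1 - 1 / y powr a) powr (1/a - 1) \<le> (1 - 1 / z powr a) powr (1/a - 1)"
      using ap by (simp add: powr_mono2)
    thus ?thesis using 1 assms c0 unfolding Dd_def by simp
  next
    case 2
    have "y powr a \<le> 1" using 2 assms pw_le1 by simp
    hence "0 \<le> 1 / y powr a - 1" using pos by simp
    hence q1: "0 \<le> (1 / y powr a - 1) powr (1/a - 1)" by simp
    have "1 \<le> z powr a" using 2 pw_ge1 by simp
    hence q2: "0 \<le> (1 - 1 / z powr a) powr (1/a - 1)" by simp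
    have "0 \<le> c * (1 / y powr a - 1) powr (1/a - 1)" "0 \<le> c * (1 - 1 / z powr a) powr (1/a - 1)"
      using q1 q2 c0 by auto
    moreover have "Dd a c y = - (c * (1 / y powr a - 1) powr (1/a - 1))" "Dd a c z = c * (1 - 1 / z powr a) powr (1/a - 1)"
      using 2 unfolding Dd_def by auto
    ultimately show ?thesis by linarith
  next
    case 3
    have "z powr a \<le> 1" using 3 assms pw_le1 by simp
    hence "0 \<le> 1 / z powr a - 1" using pos by simp
    moreover have "1 / z powr a - 1 \<le> 1 / y powr a - 1" using yz pos by (simp add: frac_le)
    ultimately have "(1 / z powr a - 1) powr (1/a - 1) \<le> (1 / y powr a - 1) powr (1/a - 1)"
      using ap by (simp add: powr_mono2)
    thus ?thesis using 3 assms c0 unfolding Dd_def by simp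
  qed
qed

lemma deriv_gpow: "0 < z \<Longrightarrow> z \<noteq> 1 \<Longrightarrow> DERIV (gpow a c) z :> Dd a c z"
  using deriv_gt1 deriv_lt1 by (cases "z < 1") auto

lemma tangent:
  assumes x: "x > 0" and y: "y > 0"
  shows "gpow a c x \<ge> gpow a c y + Dd a c y * (x - y)"
proof -
  define h where "h z = gpow a c z - Dd a c y * z" for z
  have hd: "DERIV h z :> Dd a c z - Dd a c y" if "0 < z" "z \<noteq> 1" for z
    unfolding h_def using deriv_gpow[OF that] by (auto intro!: derivative_eq_intros)
  have hc: "continuous_on {u..v} h" if "0 < u" for u v
  proof -
    have "continuous_on {u..v} (gpow a c)" using gpow_cont
      by (rule continuous_on_subset) (use that in auto)
    thus ?thesis unfolding h_def by (intro continuous_intros)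
  qed
  have "h y \<le> h x"
  proof (cases "y \<le> x")
    case True
    show ?thesis
    proof (rule incr_split[OF True])
      show "continuous_on {y..x} h" using hc y by simp
      fix z assume "y < z" "z < x" "z \<noteq> 1"
      thus "DERIV h z :> Dd a c z - Dd a c y \<and> Dd a c z - Dd a c y \<ge> 0"
        using hd Dd_mono y by auto
    qed
  next
    case False
    have "(\<lambda>z. - h z) x \<le> (\<lambda>z. - h z) y"
    proof (rule incr_split[of x y "\<lambda>z. - h z" "\<lambda>z. - (Dd a c z - Dd a c y)"])
      show "x \<le> y" using False by simp
      show "continuous_on {x..y} (\<lambda>z. - h z)" using hc x by (intro continuous_intros) simp
      fix z assume "x < z" "z < y" "z \<noteq> 1"
      thus "DERIV (\<lambda>z. - h z) z :> - (Dd a c z - Dd a c y) \<and> - (Dd a c z - Dd a c y) \<ge> 0"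
        using hd[of z] Dd_mono[of z y] x by (auto intro!: derivative_eq_intros)
    qed
    thus ?thesis by simp
  qed
  thus ?thesis unfolding h_def by (simp add: algebra_simps)
qed

lemma pw_inv: "y > 0 \<Longrightarrow> (y powr a) powr (1/a) = y"
  using a0 by (simp add: powr_powr)

lemma pw_split: "X > 0 \<Longrightarrow> X powr (1/a) = X powr (1/a - 1) * X"
  using powr_add[of X "1/a - 1" 1] by simp

lemma pw_ratio: "Y > 0 \<Longrightarrow> Y powr (1/a) / Y powr (1/a - 1) = Y"
  using powr_diff[of Y "1/a" "1/a - 1"] by simp

lemma gpow_sym:
  assumes y: "y > 0"
  shows "gpow a c (1/y) = gpow a c y / y"
proof -
  define Y where "Y = y powr a"
  have Y: "Y > 0" using y Y_def by simp
  have "(1/y) powr a = 1 / Y" using y Y_def by (simp add: powr_divide)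
  hence "gpow a c (1/y) = c * \<bar>(1 - Y) / Y\<bar> powr (1/a)"
    unfolding gpow_def using Y by (simp add: diff_divide_distrib)
  also have "\<dots> = c * (\<bar>1 - Y\<bar> powr (1/a) / Y powr (1/a))"
    using Y by (simp add: powr_divide)
  also have "Y powr (1/a) = y" using pw_inv y Y_def by simp
  finally show ?thesis unfolding gpow_def Y_def by (simp add: abs_minus_commute)
qed

lemma Dd_sym:
  assumes y: "y > 0"
  shows "Dd a c (1/y) = gpow a c y - y * Dd a c y"
proof -
  define Y where "Y = y powr a"
  have Y: "Y > 0" using y Y_def by simp
  have yY: "y = Y powr (1/a)" using pw_inv y Y_def by simp
  have i: "(1/y) powr a = 1 / Y" using y Y_def by (simp add: powr_divide)
  consider "y > 1" | "y < 1" | "y = 1" by linarith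
  then show ?thesis
  proof cases
    case 1
    have Y1: "Y > 1" using 1 pw_gt1 Y_def by simp
    have L: "Dd a c (1/y) = - (c * (Y - 1) powr (1/a - 1))"
      unfolding Dd_def using 1 i by simp
    have "(1 - 1 / Y) = (Y - 1) / Y" using Y by (simp add: diff_divide_distrib)
    hence "(1 - 1/Y) powr (1/a - 1) = (Y - 1) powr (1/a - 1) / Y powr (1/a - 1)"
      using Y1 by (simp add: powr_divide)
    hence D: "Dd a c y = c * ((Y - 1) powr (1/a - 1) / Y powr (1/a - 1))"
      unfolding Dd_def using 1 Y_def[symmetric] by simp
    have "y * Dd a c y = c * (Y - 1) powr (1/a - 1) * (y / Y powr (1/a - 1))"
      unfolding D by simp
    hence R: "y * Dd a c y = c * (Y - 1) powr (1/a - 1) * Y"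
      using pw_ratio[OF Y] yY by simp
    have G: "gpow a c y = c * ((Y - 1) powr (1/a - 1) * (Y - 1))"
      unfolding gpow_def Y_def[symmetric] using Y1 pw_split[of "Y - 1"] by simp
    show ?thesis using L R G by (simp add: algebra_simps)
  next
    case 2
    have Y1: "Y < 1" using 2 y pw_lt1 Y_def by simp
    have L: "Dd a c (1/y) = c * (1 - Y) powr (1/a - 1)"
      unfolding Dd_def using 2 y i by simp
    have "(1 / Y - 1) = (1 - Y) / Y" using Y by (simp add: diff_divide_distrib)
    hence "(1/Y - 1) powr (1/a - 1) = (1 - Y) powr (1/a - 1) / Y powr (1/a - 1)"
      using Y1 Y by (simp add: powr_divide)
    hence D: "Dd a c y = - (c * ((1 - Y) powr (1/a - 1) / Y powr (1/a - 1)))"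
      unfolding Dd_def using 2 Y_def[symmetric] by simp
    have "y * Dd a c y = - (c * (1 - Y) powr (1/a - 1) * (y / Y powr (1/a - 1)))"
      unfolding D by simp
    hence R: "y * Dd a c y = - (c * (1 - Y) powr (1/a - 1) * Y)"
      using pw_ratio[OF Y] yY by simp
    have G: "gpow a c y = c * ((1 - Y) powr (1/a - 1) * (1 - Y))"
      unfolding gpow_def Y_def[symmetric] using Y1 pw_split[of "1 - Y"] by (simp add: abs_minus_commute)
    show ?thesis using L R G by (simp add: algebra_simps)
  next
    case 3
    thus ?thesis unfolding Dd_def gpow_def by simp
  qed
qed

lemma kappa_eq:
  assumes b: "b > 1"
  shows "kappa a b c = Dd a c b"
proof -
  have d: "(gpow a c has_real_derivative Dd a c b) (at_left b)"
    using deriv_gt1[OF b] by (rule has_field_derivative_at_within)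
  show ?thesis unfolding kappa_def
  proof (rule the_equality[where P="\<lambda>k. (gpow a c has_real_derivative k) (at_left b)", OF d])
    fix k assume "(gpow a c has_real_derivative k) (at_left b)"
    thus "k = Dd a c b" using d has_field_derivative_unique trivial_limit_at_left_real by blast
  qed
qed

lemma Flow_ge:
  assumes b: "b > 1" and x: "x \<ge> b"
  shows "Flow a b c x = gpow a c b + Dd a c b * (x - b)"
  using assms kappa_eq[OF b] unfolding Flow_def Fup_def by simp

lemma Flow_mid:
  assumes b: "b > 1" and x: "1/b \<le> x" "x \<le> b"
  shows "Flow a b c x = gpow a c x"
proof (cases "x = b")
  case True thus ?thesis using Flow_ge[OF b] by simp
next
  case False thus ?thesis using x unfolding Flow_def by simp
qed

lemma Flow_low:
  assumes b: "b > 1" and x: "0 < x" "x < 1/b"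
  shows "Flow a b c x = x * Flow a b c (1/x)"
proof -
  have "x < b" using x b by (smt (verit, best) le_divide_eq_1_pos)
  moreover have "1/x > b" using x b by (simp add: field_simps)
  ultimately show ?thesis using x unfolding Flow_def by simp
qed

lemma Flow_zero:
  assumes b: "b > 1"
  shows "Flow a b c 0 = Dd a c b"
proof -
  have "Flow a b c 0 = Lim (at_right 0) (\<lambda>t. t * Fup a b c (1 / t))"
    using b unfolding Flow_def by simp
  also have "\<dots> = Dd a c b"
  proof (rule tendsto_Lim)
    show "\<not> trivial_limit (at_right (0::real))" by simp
    have "((\<lambda>t. t * gpow a c b + Dd a c b - Dd a c b * b * t) \<longlongrightarrow> 0 * gpow a c b + Dd a c b - Dd a c b * b * 0) (at_right 0)"
      by (intro tendsto_intros)
    hence "((\<lambda>t. t * gpow a c b + Dd a c b - Dd a c b * b * t) \<longlongrightarrow> Dd a c b) (at_right 0)" by simp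
    moreover have "\<forall>\<^sub>F t in at_right 0. t * gpow a c b + Dd a c b - Dd a c b * b * t = t * Fup a b c (1 / t)"
      unfolding Fup_def kappa_eq[OF b] eventually_at_right_less
      by (simp add: eventually_at_right_less algebra_simps eventually_at_filter)
    ultimately show "((\<lambda>t. t * Fup a b c (1 / t)) \<longlongrightarrow> Dd a c b) (at_right 0)"
      by (rule Lim_transform_eventually)
  qed
  finally show ?thesis .
qed

lemma TLF:
  assumes b: "b > 1" and x: "x > 0" and y: "1/b \<le> y" "y \<le> b"
  shows "Flow a b c x \<ge> gpow a c y + Dd a c y * (x - y)"
proof -
  have y0: "y > 0" using y b by (smt (verit) divide_pos_pos)
  have hi: "Flow a b c x \<ge> gpow a c y + Dd a c y * (x - y)" if xb: "x \<ge> b" and yb: "y \<le> b" "y > 0" for x y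
  proof -
    have "gpow a c b \<ge> gpow a c y + Dd a c y * (b - y)" using tangent b yb by simp
    moreover have "Dd a c y * (x - b) \<le> Dd a c b * (x - b)"
      using Dd_mono[of y b] yb xb by (simp add: mult_right_mono)
    ultimately show ?thesis using Flow_ge[OF b xb] by (simp add: algebra_simps)
  qed
  consider "x \<ge> b" | "1/b \<le> x" "x \<le> b" | "x < 1/b" by linarith
  then show ?thesis
  proof cases
    case 1 thus ?thesis using hi y y0 by simp
  next
    case 2 thus ?thesis using Flow_mid[OF b] tangent x y0 by simp
  next
    case 3
    have ix: "1/x \<ge> b" using 3 x b by (simp add: field_simps)
    have iy: "1/y \<le> b" "1/y > 0" using y y0 b by (auto simp add: field_simps)
    have "Flow a b c (1/x) \<ge> gpow a c (1/y) + Dd a c (1/y) * (1/x - 1/y)"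
      using hi[OF ix iy] .
    hence "x * Flow a b c (1/x) \<ge> x * (gpow a c (1/y) + Dd a c (1/y) * (1/x - 1/y))"
      using x by (simp add: mult_left_mono)
    also have "x * (gpow a c (1/y) + Dd a c (1/y) * (1/x - 1/y)) = gpow a c y + Dd a c y * (x - y)"
      unfolding gpow_sym[OF y0] Dd_sym[OF y0] using x y0 by (simp add: field_simps)
    finally show ?thesis using Flow_low[OF b x 3] by simp
  qed
qed

lemma Dd_Y:
  assumes y: "y > 0"
  shows "Dd a c y = (if y powr a \<ge> 1 then c * (1 - 1 / (y powr a)) powr (1/a - 1)
               else - (c * (1 / (y powr a) - 1) powr (1/a - 1)))"
proof -
  have "y \<ge> 1 \<longleftrightarrow> y powr a \<ge> 1"
    using pw_ge1 pw_lt1 y by (metis less_le_not_le linorder_le_less_linear)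
  thus ?thesis unfolding Dd_def by simp
qed

lemma powa_powp: "m > 0 \<Longrightarrow> (m powr (1/a)) powr a = m"
  using a0 by (simp add: powr_powr)

lemma case_mid:
  assumes t1: "1 \<le> t" and tb: "t powr a \<le> 2 * b powr a - 1" and b: "b > 1"
  defines "m \<equiv> (1 + t powr a) / 2"
  defines "th \<equiv> m powr (1/a)"
  shows "1/b \<le> th" "th \<le> b" "1/b \<le> th / t" "th / t \<le> b"
    "Dd a c th + Dd a c (th / t) = 0"
    "2 powr (1/a - 1) * (gpow a c th + t * gpow a c (th / t)) = gpow a c t"
proof -
  define \<tau> where "\<tau> = t powr a"
  define B where "B = b powr a"
  have mdef: "m = (1 + \<tau>) / 2" unfolding m_def \<tau>_def ..
  have \<tau>1: "\<tau> \<ge> 1" using t1 pw_ge1 \<tau>_def by simp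
  have B1: "B > 1" using b pw_gt1 B_def by simp
  have m1: "m \<ge> 1" "m \<le> B" "m \<le> \<tau>" using \<tau>1 tb unfolding mdef B_def[symmetric] \<tau>_def[symmetric] by auto
  have t0: "t > 0" using t1 by simp
  have tt: "t = \<tau> powr (1/a)" using pw_inv t0 \<tau>_def by simp
  have bb: "b = B powr (1/a)" using pw_inv b B_def by simp
  have tha: "th powr a = m" unfolding th_def using powa_powp m1 by simp
  have tht: "th / t = (m / \<tau>) powr (1/a)" unfolding th_def tt using m1 \<tau>1 by (simp add: powr_divide)
  have thta: "(th / t) powr a = m / \<tau>" unfolding tht using powa_powp m1 \<tau>1 by simp
  have p0: "1/a > 0" using a0 by simp
  show "th \<le> b" unfolding th_def bb using m1 p0 by (simp add: powr_mono2)
  have "th \<ge> 1" unfolding th_def using m1 p0 by (simp add: ge_one_powr_ge_zero)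
  thus "1/b \<le> th" using b by (smt (verit) le_divide_eq_1_pos)
  have mt: "m / \<tau> \<le> 1" using m1 \<tau>1 by simp
  have "th / t \<le> 1" unfolding tht using mt m1 \<tau>1 p0 by (simp add: powr_le1)
  thus "th / t \<le> b" using b by simp
  have "m / \<tau> \<ge> 1 / B"
  proof -
    have "(2*B - 1) * (2 - B) = B - 2*((B-1)*(B-1))" by (simp add: algebra_simps)
    moreover have "0 \<le> (B-1)*(B-1)" by simp
    ultimately have "(2*B - 1) * (2 - B) \<le> B" by linarith
    have "\<tau> * (2 - B) \<le> B"
    proof (cases "B \<ge> 2")
      case True thus ?thesis using \<tau>1 B1 by (smt (verit) mult_nonneg_nonpos)
    next
      case False
      have "\<tau> * (2 - B) \<le> (2*B - 1) * (2 - B)" using False tb unfolding \<tau>_def[symmetric] B_def[symmetric]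
        by (intro mult_right_mono) auto
      thus ?thesis using \<open>(2*B - 1) * (2 - B) \<le> B\<close> by linarith
    qed
    hence "2 * \<tau> \<le> B * (1 + \<tau>)" by (simp add: algebra_simps)
    thus ?thesis unfolding mdef using \<tau>1 B1 by (simp add: field_simps)
  qed
  hence "(1/B) powr (1/a) \<le> th / t" unfolding tht using B1 p0 by (simp add: powr_mono2)
  thus "1/b \<le> th / t" unfolding bb using B1 by (simp add: powr_divide)
  show "Dd a c th + Dd a c (th / t) = 0"
  proof (cases "\<tau> = 1")
    case True
    hence "m = 1" unfolding m_def \<tau>_def by simp
    thus ?thesis using Dd_Y tha thta True t0 th_def by simp
  next
    case False
    hence \<tau>g: "\<tau> > 1" using \<tau>1 by simp
    have "m / \<tau> < 1" using \<tau>g unfolding mdef by simp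
    have e: "1 - 1/m = \<tau> / m - 1" unfolding mdef using \<tau>g by (simp add: field_simps)
    have "th > 0" using t0 \<open>1/b \<le> th\<close> b by (smt (verit) divide_pos_pos)
    hence d1: "Dd a c th = c * (1 - 1/m) powr (1/a - 1)" using Dd_Y tha m1 by simp
    have d2: "Dd a c (th / t) = - (c * (\<tau> / m - 1) powr (1/a - 1))"
      using Dd_Y[of "th / t"] thta \<open>m / \<tau> < 1\<close> \<open>th > 0\<close> t0 by simp
    show ?thesis unfolding d1 d2 e by simp
  qed
  have e1: "gpow a c th = c * ((\<tau> - 1) / 2) powr (1/a)"
    unfolding gpow_def tha mdef using \<tau>1 by simp
  have "t * gpow a c (th / t) = c * (t * \<bar>m / \<tau> - 1\<bar> powr (1/a))"
    unfolding gpow_def thta by simp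
  also have "\<dots> = c * (\<tau> powr (1/a) * \<bar>m / \<tau> - 1\<bar> powr (1/a))"
    using tt by simp
  also have "\<tau> powr (1/a) * \<bar>m / \<tau> - 1\<bar> powr (1/a) = (\<tau> * \<bar>m / \<tau> - 1\<bar>) powr (1/a)"
    using \<tau>1 by (simp add: powr_mult)
  also have "\<tau> * \<bar>m / \<tau> - 1\<bar> = (\<tau> - 1) / 2"
    using m1 \<tau>1 unfolding mdef by (simp add: field_simps abs_if)
  finally have e2: "t * gpow a c (th / t) = c * ((\<tau> - 1) / 2) powr (1/a)" .
  have "2 powr (1/a - 1) * (2 * ((\<tau> - 1) / 2) powr (1/a)) = (\<tau> - 1) powr (1/a)"
  proof -
    have q: "((\<tau> - 1) / 2) powr (1/a) = (\<tau> - 1) powr (1/a) / 2 powr (1/a)" using \<tau>1 by (simp add: powr_divide)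
    have k: "2 powr (1/a - 1) = 2 powr (1/a) / 2" using powr_diff[of 2 "1/a" 1] by simp
    have "2 powr (1/a) > 0" by simp
    thus ?thesis unfolding q k by (simp add: field_simps)
  qed
  moreover have "gpow a c t = c * (\<tau> - 1) powr (1/a)" unfolding gpow_def \<tau>_def[symmetric] using \<tau>1 by simp
  ultimately show "2 powr (1/a - 1) * (gpow a c th + t * gpow a c (th / t)) = gpow a c t"
    unfolding e1 e2 by (simp add: algebra_simps)
qed

lemma case_high:
  assumes b: "b > 1"
  defines "B \<equiv> b powr a"
  defines "b' \<equiv> (2 * B - 1) powr (1/a)"
  defines "y1 \<equiv> b / b'"
  shows "b' > b" "1/b \<le> y1" "y1 \<le> b" "y1 > 0"
    "Dd a c b + Dd a c y1 = 0"
    "2 powr (1/a - 1) * (gpow a c b - Dd a c b * b) = gpow a c b' - Dd a c b' * b'"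
    "2 powr (1/a - 1) * (gpow a c y1 - Dd a c y1 * y1) = Dd a c b'"
proof -
  define B' where "B' = 2 * B - 1"
  define X where "X = B - 1"
  define q where "q = 1/a - 1"
  have B1: "B > 1" using b pw_gt1 B_def by simp
  have X0: "X > 0" using B1 X_def by simp
  have B'B: "B' > B" using B1 B'_def by simp
  have B'X: "B' = 2 * X + 1" "B = X + 1" using B'_def X_def by simp_all
  have bb: "b = B powr (1/a)" using pw_inv b B_def by simp
  have b'B': "b' = B' powr (1/a)" using b'_def B'_def by simp
  have p0: "1/a > 0" using a0 by simp
  show "b' > b" unfolding bb b'B' using B'B B1 p0 by (simp add: powr_less_mono2)
  have b'0: "b' > 0" using b'B' B'B B1 by simp
  show "y1 > 0" unfolding y1_def using b b'0 by simp
  have y1B: "y1 = (B / B') powr (1/a)" unfolding y1_def bb b'B' using B1 B'B by (simp add: powr_divide)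
  have y1a: "y1 powr a = B / B'" unfolding y1B using powa_powp B1 B'B by simp
  have ba: "b powr a = B" using B_def by simp
  have b'a: "b' powr a = B'" unfolding b'B' using powa_powp B'B B1 by simp
  have "B / B' < 1" using B'B B1 by simp
  hence "y1 < 1" unfolding y1B using B'B B1 p0 powr_less_mono2[of "1/a" "B/B'" 1] by simp
  thus "y1 \<le> b" using b by simp
  have "1 / B \<le> B / B'"
  proof -
    have "B' \<le> B * B" unfolding B'X by (simp add: algebra_simps)
    thus ?thesis using B1 B'B by (simp add: field_simps)
  qed
  hence "(1/B) powr (1/a) \<le> y1" unfolding y1B using B1 p0 by (simp add: powr_mono2)
  thus "1/b \<le> y1" unfolding bb using B1 by (simp add: powr_divide)
  have Ddb: "Dd a c b = c * (X / B) powr q"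
  proof -
    have "1 - 1/B = X / B" using B'X B1 by (simp add: field_simps)
    thus ?thesis using Dd_Y[of b] b ba B1 q_def by simp
  qed
  have Ddy1: "Dd a c y1 = - (c * (X / B) powr q)"
  proof -
    have "1 / (B / B') - 1 = X / B" using B'X B1 by (simp add: field_simps)
    thus ?thesis using Dd_Y[of y1] \<open>y1 > 0\<close> y1a \<open>B / B' < 1\<close> q_def by simp
  qed
  show "Dd a c b + Dd a c y1 = 0" unfolding Ddb Ddy1 by simp
  have Ddb': "Dd a c b' = c * ((2 * X) powr q / B' powr q)"
  proof -
    have "1 - 1/B' = (2 * X) / B'" using B'X B1 by (simp add: field_simps)
    moreover have "B' \<ge> 1" using B'B B1 by simp
    ultimately show ?thesis using Dd_Y[of b'] b'0 b'a q_def X0 B'B B1 by (simp add: powr_divide)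
  qed
  have gb: "gpow a c b = c * (X powr q * X)" unfolding gpow_def ba using pw_split X0 B'X q_def by simp
  have gb': "gpow a c b' = c * ((2*X) powr q * (2 * X))" unfolding gpow_def b'a using pw_split[of "2*X"] X0 B'X q_def by simp
  have gy1: "gpow a c y1 = c * (X powr q * X / (B' powr q * B'))"
  proof -
    have "\<bar>B / B' - 1\<bar> = X / B'" using B'X B1 by (simp add: field_simps)
    hence "gpow a c y1 = c * (X / B') powr (1/a)" unfolding gpow_def y1a by simp
    also have "(X / B') powr (1/a) = X powr (1/a) / B' powr (1/a)" using X0 B'B B1 by (simp add: powr_divide)
    finally show ?thesis using pw_split[of X] pw_split[of B'] X0 B'B B1 q_def by simp
  qed
  have rB: "B powr (1/a) / B powr q = B" using pw_ratio B1 q_def by simp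
  have rB': "B' powr (1/a) / B' powr q = B'" using pw_ratio B1 B'B q_def by simp
  have XB: "(X / B) powr q = X powr q / B powr q" using X0 B1 by (simp add: powr_divide)
  have X2: "(2 * X) powr q = 2 powr q * X powr q" using X0 by (simp add: powr_mult)
  have Bpos: "B powr q > 0" "B' powr q > 0" "X powr q > 0" using B1 B'B X0 by auto
  have "gpow a c b - Dd a c b * b = c * (X powr q * X) - c * X powr q * (b / B powr q)"
    unfolding gb Ddb XB by simp
  also have "\<dots> = c * (X powr q * X) - c * X powr q * B" using bb rB by simp
  also have "\<dots> = - (c * X powr q)" unfolding B'X by (simp add: algebra_simps)
  finally have Ab: "gpow a c b - Dd a c b * b = - (c * X powr q)" .
  have "gpow a c b' - Dd a c b' * b' = c * ((2*X) powr q * (2 * X)) - c * (2*X) powr q * (b' / B' powr q)"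
    unfolding gb' Ddb' by simp
  also have "\<dots> = c * ((2*X) powr q * (2 * X)) - c * (2*X) powr q * B'" using b'B' rB' by simp
  also have "\<dots> = - (c * (2*X) powr q)" unfolding B'X by (simp add: algebra_simps)
  finally have Ab': "gpow a c b' - Dd a c b' * b' = - (c * (2*X) powr q)" .
  show "2 powr (1/a - 1) * (gpow a c b - Dd a c b * b) = gpow a c b' - Dd a c b' * b'"
    unfolding Ab Ab' X2 q_def[symmetric] by simp
  have f1: "gpow a c y1 - Dd a c y1 * y1 = c * (X powr q * X / (B' powr q * B')) + c * (X powr q / B powr q) * y1"
    unfolding gy1 Ddy1 XB by simp
  have y1v: "y1 = (B powr q * B) / (B' powr q * B')"
    unfolding y1B using B1 B'B pw_split[of B] pw_split[of B'] q_def by (simp add: powr_divide)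
  have E: "c * (X powr q * X / (B' powr q * B')) + c * (X powr q / B powr q) * ((B powr q * B) / (B' powr q * B'))
      = c * X powr q / B' powr q"
  proof -
    have "c * (X powr q * X / (B' powr q * B')) + c * (X powr q / B powr q) * ((B powr q * B) / (B' powr q * B'))
        = c * X powr q * (X + B) / (B' powr q * B')" using Bpos B1 B'B by (simp add: field_simps)
    also have "X + B = B'" using B'X by simp
    finally show ?thesis using B1 B'B Bpos by simp
  qed
  have Ay1: "gpow a c y1 - Dd a c y1 * y1 = c * X powr q / B' powr q"
    using f1 E y1v by simp
  show "2 powr (1/a - 1) * (gpow a c y1 - Dd a c y1 * y1) = Dd a c b'"
    unfolding Ay1 Ddb' X2 q_def[symmetric] by simp
qed

lemma Flow_sym:
  assumes b: "b > 1" and t: "0 < t" "t < 1"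
  shows "Flow a b c t = t * Flow a b c (1/t)"
proof (cases "t < 1/b")
  case True thus ?thesis using Flow_low b t by simp
next
  case False
  have "1/t \<le> b" using False t b by (simp add: field_simps)
  moreover have "1/t \<ge> 1/b" using t b by (simp add: field_simps)
  ultimately have "Flow a b c (1/t) = gpow a c (1/t)" using Flow_mid b by simp
  moreover have "Flow a b c t = gpow a c t" using Flow_mid b False t by simp
  ultimately show ?thesis using gpow_sym t by simp
qed

lemma bn_facts: "b > 1 \<Longrightarrow> bn a b > b \<and> bn a b > 1"
  using case_high(1)[of b] unfolding bn_def by simp

lemma cert_ge1:
  assumes b: "b > 1" and t: "t \<ge> 1"
  shows "\<exists>y0 y1 th. Cert a b c t y0 y1 th"
proof -
  define b' where "b' = bn a b"
  have b'b: "b' > b" "b' > 1" using bn_facts b b'_def by auto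
  have t0: "t > 0" using t by simp
  show ?thesis
  proof (cases "t \<le> b'")
    case True
    have ta: "t powr a \<le> 2 * b powr a - 1"
    proof -
      have "t powr a \<le> b' powr a" using True t0 a0 by (simp add: powr_mono2)
      moreover have "b' powr a = 2 * b powr a - 1" unfolding b'_def bn_def
        using powa_powp pw_gt1[OF b] by simp
      ultimately show ?thesis by simp
    qed
    define th where "th = ((1 + t powr a) / 2) powr (1/a)"
    note cm = case_mid[OF t ta b, folded th_def]
    have th0: "th > 0" using cm(1) b by (smt (verit) divide_pos_pos)
    have Q: "Qv a b c t th = gpow a c th + t * gpow a c (th / t)"
      unfolding Qv_def using t0 Flow_mid[OF b cm(1,2)] Flow_mid[OF b cm(3,4)] by simp
    have AA: "Aa a c th + t * Aa a c (th / t) = gpow a c th + t * gpow a c (th / t) - th * (Dd a c th + Dd a c (th / t))"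
      unfolding Aa_def using t0 by (simp add: algebra_simps)
    have "1 / b' \<le> t" using b'b t by (smt (verit) le_divide_eq_1_pos)
    hence Fl: "Flow a b' c t = gpow a c t" using Flow_mid[OF b'b(2)] True by simp
    have "Cert a b c t th (th / t) th"
      unfolding Cert_def b'_def[symmetric] using cm th0 Q AA Fl by simp
    thus ?thesis by blast
  next
    case False
    note ch = case_high[OF b, folded bn_def b'_def]
    define y1 where "y1 = b / b'"
    note ch = ch[folded y1_def]
    define th where "th = b * t / b'"
    have th0: "th > 0" unfolding th_def using b b'b t0 by simp
    have thb: "th \<ge> b" unfolding th_def using False b b'b by (simp add: field_simps)
    have tht: "th / t = y1" unfolding th_def y1_def using t0 by simp
    have Q: "Qv a b c t th = gpow a c b + Dd a c b * (th - b) + t * gpow a c y1"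
      unfolding Qv_def tht using t0 Flow_ge[OF b thb] Flow_mid[OF b ch(2,3)] by simp
    have ty: "t * y1 = th" using tht t0 by (simp add: field_simps)
    have AA: "Aa a c b + t * Aa a c y1 = gpow a c b + Dd a c b * (th - b) + t * gpow a c y1"
    proof -
      have "Dd a c y1 = - Dd a c b" using ch(5) by simp
      hence "Aa a c b + t * Aa a c y1 = gpow a c b - Dd a c b * b + t * gpow a c y1 + Dd a c b * (t * y1)"
        unfolding Aa_def by (simp add: algebra_simps)
      thus ?thesis unfolding ty by (simp add: algebra_simps)
    qed
    have "2 powr (1/a - 1) * (Aa a c b + t * Aa a c y1) = gpow a c b' - Dd a c b' * b' + t * Dd a c b'"
      using ch(6,7) unfolding Aa_def by (simp add: algebra_simps)
    also have "\<dots> = Flow a b' c t" using Flow_ge[OF b'b(2)] False by (simp add: algebra_simps)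
    finally have K: "2 powr (1/a - 1) * (Aa a c b + t * Aa a c y1) = Flow a b' c t" .
    have "Cert a b c t b y1 th"
      unfolding Cert_def b'_def[symmetric] using ch th0 Q AA K b by (simp add: less_imp_le)
    thus ?thesis by blast
  qed
qed

lemma cert_all:
  assumes b: "b > 1" and t: "t \<ge> 0"
  shows "\<exists>y0 y1 th. Cert a b c t y0 y1 th"
proof -
  define b' where "b' = bn a b"
  have b'b: "b' > b" "b' > 1" using bn_facts b b'_def by auto
  consider "t \<ge> 1" | "t = 0" | "0 < t" "t < 1" using t by linarith
  then show ?thesis
  proof cases
    case 1 thus ?thesis using cert_ge1 b by blast
  next
    case 2
    note ch = case_high[OF b, folded bn_def b'_def]
    define y1 where "y1 = b / b'"
    note ch = ch[folded y1_def]
    have dy: "Dd a c y1 = - Dd a c b" using ch(5) by simp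
    have Q: "Qv a b c 0 y1 = Aa a c y1"
      unfolding Qv_def Aa_def dy using Flow_mid[OF b ch(2,3)] by (simp add: algebra_simps)
    have "Cert a b c 0 y1 b y1"
      unfolding Cert_def b'_def[symmetric] Aa_def using ch Q[unfolded Aa_def] Flow_zero[OF b'b(2)] b by (simp add: less_imp_le)
    thus ?thesis using 2 by blast
  next
    case 3
    have "1/t \<ge> 1" using 3 by simp
    then obtain y0 y1 th where C: "Cert a b c (1/t) y0 y1 th" using cert_ge1 b by blast
    have Q: "Qv a b c t (t * th) = t * Qv a b c (1/t) th"
      unfolding Qv_def using 3 C unfolding Cert_def by (simp add: algebra_simps)
    have K: "2 powr (1/a - 1) * (Aa a c y1 + t * Aa a c y0) = t * (2 powr (1/a - 1) * (Aa a c y0 + (1/t) * Aa a c y1))"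
      using 3 by (simp add: algebra_simps)
    have "Cert a b c t y1 y0 (t * th)"
      unfolding Cert_def
    proof (intro conjI)
      show "Qv a b c t (t * th) = Aa a c y1 + t * Aa a c y0"
        unfolding Q using C 3 unfolding Cert_def by (simp add: algebra_simps)
      show "2 powr (1/a - 1) * (Aa a c y1 + t * Aa a c y0) = Flow a (bn a b) c t"
        unfolding K using C Flow_sym[OF b'b(2) 3] unfolding Cert_def b'_def by simp
    qed (use C 3 in \<open>auto simp: Cert_def\<close>)
    thus ?thesis by blast
  qed
qed

lemma recF_Flow:
  assumes b: "b > 1" and th: "th > 0"
  shows "recF (\<lambda>x. ereal (Flow a b c x)) th = ereal (Dd a c b * th)"
  unfolding recF_def
proof (rule tendsto_Lim)
  show "\<not> trivial_limit (at_top :: real filter)" by simp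
  define k where "k = gpow a c b + Dd a c b * (1 - b)"
  have "((\<lambda>x. k * inverse x + Dd a c b * th) \<longlongrightarrow> k * 0 + Dd a c b * th) at_top"
    by (intro tendsto_intros tendsto_inverse_0_at_top filterlim_ident)
  hence l: "((\<lambda>x. ereal (k * inverse x + Dd a c b * th)) \<longlongrightarrow> ereal (Dd a c b * th)) at_top"
    by (intro tendsto_ereal) simp
  have ev: "\<forall>\<^sub>F x in at_top. ereal (k * inverse x + Dd a c b * th) = ereal (Flow a b c (1 + x * th)) / ereal x"
  proof -
    have "\<forall>\<^sub>F x in at_top. x > max 0 ((b - 1) / th)" by (rule eventually_gt_at_top)
    thus ?thesis
    proof eventually_elim
      case (elim x)
      hence x0: "x > 0" and "x > (b - 1) / th" by auto
      hence "x * th > b - 1" using th by (simp add: field_simps)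
      hence "1 + x * th \<ge> b" by simp
      hence "Flow a b c (1 + x * th) = gpow a c b + Dd a c b * (1 + x * th - b)" using Flow_ge b by simp
      thus ?case using x0 unfolding k_def by (simp add: field_simps)
    qed
  qed
  show "((\<lambda>\<alpha>. ereal (Flow a b c (1 + \<alpha> * th)) / ereal \<alpha>) \<longlongrightarrow> ereal (Dd a c b * th)) at_top"
    using Lim_transform_eventually[OF l ev] .
qed

lemma persp_Flow:
  assumes b: "b > 1" and th: "th > 0" and r: "r \<ge> 0"
  shows "persp (\<lambda>x. ereal (Flow a b c x)) th r = ereal (Pr a b c r th)"
  unfolding persp_def Pr_def using recF_Flow[OF b th] r by simp

lemma Pr_lower:
  assumes b: "b > 1" and th: "th > 0" and r: "r \<ge> 0" and y: "1/b \<le> y" "y \<le> b"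
  shows "Pr a b c r th \<ge> r * Aa a c y + Dd a c y * th"
proof (cases "r > 0")
  case True
  have "Flow a b c (th / r) \<ge> gpow a c y + Dd a c y * (th / r - y)"
    using TLF[OF b _ y] th True by simp
  hence "r * Flow a b c (th / r) \<ge> r * (gpow a c y + Dd a c y * (th / r - y))"
    using True by (simp add: mult_left_mono)
  also have "r * (gpow a c y + Dd a c y * (th / r - y)) = r * Aa a c y + Dd a c y * th"
    unfolding Aa_def using True by (simp add: field_simps)
  finally show ?thesis unfolding Pr_def using True by simp
next
  case False
  hence r0: "r = 0" using r by simp
  have "y > 0" using y b by (smt (verit) divide_pos_pos)
  hence "Dd a c y \<le> Dd a c b" using Dd_mono y by simp
  thus ?thesis unfolding Pr_def using r0 th by (simp add: mult_right_mono)
qed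

lemma tildeH_lower:
  assumes b: "b > 1" and C: "Cert a b c t y0 y1 th0" and r: "r1 \<ge> 0" "r2 \<ge> 0"
  shows "tildeH (\<lambda>x. ereal (Flow a b c x)) (r1, r2) \<ge> ereal (r1 * Aa a c y0 + r2 * Aa a c y1)"
  unfolding tildeH_def
proof (rule INF_greatest)
  fix th :: real assume "th \<in> {0<..}"
  hence th: "th > 0" by simp
  have cy: "1/b \<le> y0" "y0 \<le> b" "1/b \<le> y1" "y1 \<le> b" "Dd a c y0 + Dd a c y1 = 0"
    using C unfolding Cert_def by auto
  have "Dd a c y0 * th + Dd a c y1 * th = 0" using cy(5) by (simp add: distrib_right[symmetric])
  hence "Pr a b c r1 th + Pr a b c r2 th \<ge> r1 * Aa a c y0 + r2 * Aa a c y1"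
    using Pr_lower[OF b th r(1) cy(1,2)] Pr_lower[OF b th r(2) cy(3,4)] by linarith
  thus "ereal (r1 * Aa a c y0 + r2 * Aa a c y1) \<le> persp (\<lambda>x. ereal (Flow a b c x)) th (fst (r1, r2)) + persp (\<lambda>x. ereal (Flow a b c x)) th (snd (r1, r2))"
    using persp_Flow[OF b th r(1)] persp_Flow[OF b th r(2)] by simp
qed

lemma tildeH_val:
  assumes b: "b > 1" and C: "Cert a b c t y0 y1 th0" and t: "t \<ge> 0"
  shows "tildeH (\<lambda>x. ereal (Flow a b c x)) (1, t) = ereal (Aa a c y0 + t * Aa a c y1)"
proof (rule antisym)
  show "ereal (Aa a c y0 + t * Aa a c y1) \<le> tildeH (\<lambda>x. ereal (Flow a b c x)) (1, t)"
    using tildeH_lower[OF b C _ t, of 1] by simp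
  have th0: "th0 > 0" using C unfolding Cert_def by simp
  have "tildeH (\<lambda>x. ereal (Flow a b c x)) (1, t) \<le> persp (\<lambda>x. ereal (Flow a b c x)) th0 1 + persp (\<lambda>x. ereal (Flow a b c x)) th0 t"
    unfolding tildeH_def using th0 by (intro INF_lower2[of th0]) auto
  also have "\<dots> = ereal (Pr a b c 1 th0 + Pr a b c t th0)"
    using persp_Flow[OF b th0] t by simp
  also have "Pr a b c 1 th0 + Pr a b c t th0 = Qv a b c t th0"
    unfolding Pr_def Qv_def using t by auto
  also have "\<dots> = Aa a c y0 + t * Aa a c y1" using C unfolding Cert_def by simp
  finally show "tildeH (\<lambda>x. ereal (Flow a b c x)) (1, t) \<le> ereal (Aa a c y0 + t * Aa a c y1)" .
qed

lemma HF_val: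
  assumes b: "b > 1" and C: "Cert a b c t y0 y1 th0" and t: "t \<ge> 0"
  shows "HF (\<lambda>x. ereal (Flow a b c x)) 1 t = ereal (Aa a c y0 + t * Aa a c y1)"
proof -
  let ?F = "\<lambda>x. ereal (Flow a b c x)"
  let ?S = "{0::real..} \<times> {0::real..}"
  have "ereal (Aa a c y0 + t * Aa a c y1) \<le> Liminf (at (1, t) within ?S) (tildeH ?F)"
    unfolding le_Liminf_iff
  proof (intro allI impI)
    fix z assume z: "z < ereal (Aa a c y0 + t * Aa a c y1)"
    have f1: "(fst \<longlongrightarrow> 1) (at (1, t) within ?S)"
      using tendsto_fst[OF tendsto_ident_at[of "(1::real, t)" ?S]] by simp
    have f2: "(snd \<longlongrightarrow> t) (at (1, t) within ?S)"
      using tendsto_snd[OF tendsto_ident_at[of "(1::real, t)" ?S]] by simp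
    have "((\<lambda>x. ereal (fst x * Aa a c y0 + snd x * Aa a c y1)) \<longlongrightarrow> ereal (1 * Aa a c y0 + t * Aa a c y1)) (at (1, t) within ?S)"
      by (intro tendsto_ereal tendsto_add tendsto_mult f1 f2 tendsto_const)
    hence "\<forall>\<^sub>F x in at (1, t) within ?S. z < ereal (fst x * Aa a c y0 + snd x * Aa a c y1)"
      using z by (intro order_tendstoD(1)) auto
    moreover have "\<forall>\<^sub>F x in at (1, t) within ?S. x \<in> ?S"
      by (simp add: eventually_at_filter)
    ultimately show "\<forall>\<^sub>F x in at (1, t) within ?S. z < tildeH ?F x"
    proof eventually_elim
      case (elim x)
      obtain r1 r2 where x: "x = (r1, r2)" by (cases x)
      have "tildeH ?F (r1, r2) \<ge> ereal (r1 * Aa a c y0 + r2 * Aa a c y1)"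
        using tildeH_lower[OF b C] elim x by auto
      thus ?case using elim x by simp
    qed
  qed
  thus ?thesis unfolding HF_def using tildeH_val[OF b C t] by (simp add: min_def)
qed

lemma Ta_Flow:
  assumes b: "b > 1" and t: "t \<ge> 0"
  shows "Ta a (\<lambda>x. ereal (Flow a b c x)) t = ereal (Flow a (bn a b) c t)"
proof -
  obtain y0 y1 th0 where C: "Cert a b c t y0 y1 th0" using cert_all[OF b t] by blast
  show ?thesis unfolding Ta_def HF_val[OF b C t] using C unfolding Cert_def by simp
qed

lemma beta_facts:
  assumes b: "b > 1"
  shows "(bn a ^^ n) b > 1 \<and> ((bn a ^^ n) b) powr a = 1 + 2^n * (b powr a - 1)"
proof (induction n)
  case 0 thus ?case using b by simp
next
  case (Suc n)
  define x where "x = (bn a ^^ n) b"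
  have x1: "x > 1" and xa: "x powr a = 1 + 2^n * (b powr a - 1)" using Suc x_def by auto
  have "bn a x > 1" using bn_facts x1 by simp
  moreover have "bn a x powr a = 2 * x powr a - 1"
    unfolding bn_def using powa_powp pw_gt1[OF x1] by simp
  ultimately show ?case using xa x_def by (simp add: algebra_simps)
qed

lemma iterate:
  assumes b: "b > 1"
  shows "\<forall>x\<ge>0. (Ta a ^^ n) (\<lambda>x. ereal (Flow a b c x)) x = ereal (Flow a ((bn a ^^ n) b) c x)"
proof (induction n)
  case 0 thus ?case by simp
next
  case (Suc n)
  have eq: "Ta a ((Ta a ^^ n) (\<lambda>x. ereal (Flow a b c x))) = Ta a (\<lambda>x. ereal (Flow a ((bn a ^^ n) b) c x))"
    by (rule Ta_cong) (use Suc in auto)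
  show ?case unfolding funpow.simps o_apply eq using Ta_Flow beta_facts[OF b] by simp
qed

lemma final_limit:
  assumes b: "b > 1" and s: "s \<ge> 0"
  shows "(\<lambda>n. ereal (Flow a ((bn a ^^ n) b) c s)) \<longlonglongrightarrow> ereal (c * \<bar>s powr a - 1\<bar> powr (1 / a))"
proof -
  define X where "X = b powr a - 1"
  have X0: "X > 0" using pw_gt1[OF b] X_def by simp
  have bf: "(bn a ^^ n) b > 1" "((bn a ^^ n) b) powr a = 1 + 2^n * X" for n
    using beta_facts[OF b] X_def by auto
  have bge: "(bn a ^^ n) b \<ge> 1 + 2^n * X" for n
  proof -
    have "((bn a ^^ n) b) powr a \<le> ((bn a ^^ n) b) powr 1"
      using bf(1)[of n] a1 by (intro powr_mono) auto
    thus ?thesis using bf(1)[of n] bf(2)[of n] by simp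
  qed
  show ?thesis
  proof (cases "s > 0")
    case True
    obtain N where N: "max s (1/s) / X < 2 ^ N" using real_arch_pow[of 2 "max s (1/s) / X"] by auto
    have "\<forall>\<^sub>F n in sequentially. Flow a ((bn a ^^ n) b) c s = c * \<bar>s powr a - 1\<bar> powr (1 / a)"
      unfolding eventually_sequentially
    proof (intro exI allI impI)
      fix n assume n: "N \<le> n"
      have "max s (1/s) < 2^N * X" using N X0 by (simp add: field_simps)
      also have "2^N * X \<le> 2^n * X" using n X0 by (simp add: power_increasing)
      also have "\<dots> \<le> (bn a ^^ n) b" using bge[of n] by simp
      finally have m: "max s (1/s) < (bn a ^^ n) b" .
      hence "s \<le> (bn a ^^ n) b" "1/s < (bn a ^^ n) b" by auto
      hence "1 / (bn a ^^ n) b \<le> s" using True bf(1)[of n] by (simp add: field_simps)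
      thus "Flow a ((bn a ^^ n) b) c s = c * \<bar>s powr a - 1\<bar> powr (1 / a)"
        using Flow_mid[OF bf(1)] \<open>s \<le> (bn a ^^ n) b\<close> unfolding gpow_def by simp
    qed
    thus ?thesis by (intro tendsto_eventually) (simp add: eventually_mono)
  next
    case False
    hence s0: "s = 0" using s by simp
    have val: "Flow a ((bn a ^^ n) b) c 0 = c * (1 - 1 / (1 + 2^n * X)) powr (1/a - 1)" for n
      using Flow_zero[OF bf(1)[of n]] bf[of n] unfolding Dd_def by simp
    have z: "(\<lambda>n. 1 / (1 + 2^n * X)) \<longlonglongrightarrow> 0"
    proof (rule Lim_null_comparison)
      show "\<forall>\<^sub>F n in sequentially. norm (1 / (1 + 2^n * X)) \<le> inverse (2^n) / X"
      proof (intro always_eventually allI)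
        fix n
        have p: "0 < (2::real)^n * X" using X0 by simp
        have "1 / (1 + 2^n * X) \<le> 1 / (2^n * X)"
          by (rule divide_left_mono) (use p in \<open>auto simp: mult_pos_pos\<close>)
        moreover have "0 < 1 / (1 + 2^n * X)" using p by simp
        ultimately show "norm (1 / (1 + 2^n * X)) \<le> inverse (2^n) / X" by (simp add: field_simps)
      qed
      show "(\<lambda>n. inverse ((2::real)^n) / X) \<longlonglongrightarrow> 0"
        by (intro tendsto_divide_zero LIMSEQ_inverse_realpow_zero) simp
    qed
    have "(\<lambda>n. c * (1 - 1 / (1 + 2^n * X)) powr (1/a - 1)) \<longlonglongrightarrow> c * (1 - 0) powr (1/a - 1)"
      by (intro tendsto_intros tendsto_powr z) simp
    hence "(\<lambda>n. Flow a ((bn a ^^ n) b) c 0) \<longlonglongrightarrow> c" unfolding val by simp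
    thus ?thesis unfolding s0 using a0 by (intro tendsto_ereal) simp
  qed
qed

end

theorem mainTheorem11:
  fixes a b c s :: real
  assumes "0 < a" "a \<le> 1" "b > 1" "c > 0" "s \<ge> 0"
  shows "(\<lambda>n. ((Ta a ^^ n) (\<lambda>x. ereal (Flow a b c x))) s)
           \<longlonglongrightarrow> ereal (c * \<bar>s powr a - 1\<bar> powr (1 / a))"
  using final_limit[OF assms(1,2,4,3,5)] iterate[OF assms(1,2,4,3)] assms(5) by simp

end
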